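(* Let $k,n\ge1$, $m=kn-1$, and let $\varphi\in C^\infty(\mathbb P_m\mathbb C)$ be $g$-admissible and $G_{n,k}$-invariant with $\sup_{\mathbb P_m\mathbb C}\varphi=0$. Then $(\varphi-\psi)([1,\dots,1])\ge0$.
   Context: Homogeneous coordinates on $\mathbb P_m\mathbb C$, $m=kn-1$, are written $[z_0,\dots,z_m]=[Z_0,\dots,Z_{k-1}]$ with blocks $Z_h=(z_{hn},\dots,z_{(h+1)n-1})$. The metric $g$ has components $g_{\lambda\bar\mu}=a_m\,\partial^2\ln(1+|z_1|^2+\cdots+|z_m|^2)/\partial z_\lambda\partial\bar z_\mu$ in the chart $\{z_0=1\}$, for a fixed $a_m>0$. $\varphi$ is $g$-admissible if $g_{\lambda\bar\mu}+\partial^2\varphi/\partial z_\lambda\partial\bar z_\mu$ is positive definite everywhere. $G_{n,k}$ is the automorphism group generated by swaps of two blocks $Z_i,Z_j$, multiplication of a single coordinate $z_p$ by $e^{i\theta}$, and transpositions of two coordinates in the same block. $\psi([z_0,\dots,z_m])=\ln\big((|z_0|\cdots|z_m|)^{2a_m/(m+1)}/(|z_0|^2+\cdots+|z_m|^2)^{a_m}\big)$, so that $\psi([1,\dots,1])=-a_m\ln(m+1)$. *)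

theory Defs
  imports "HOL-Analysis.Analysis"
begin

fun dderivs :: "'a::real_normed_vector list \<Rightarrow> ('a \<Rightarrow> real) \<Rightarrow> 'a \<Rightarrow> real" where
  "dderivs [] f = f"
| "dderivs (v # vs) f = (\<lambda>x. frechet_derivative (dderivs vs f) (at x) v)"

definition smooth_on :: "'a::real_normed_vector set \<Rightarrow> ('a \<Rightarrow> real) \<Rightarrow> bool" where
  "smooth_on U f \<longleftrightarrow> (\<forall>vs. \<forall>x\<in>U. dderivs vs f differentiable (at x))"

text \<open>Homogeneous coordinates: a point of C^(N) is z :: complex^'i, and
  ix : {0..<N} -> 'i is a fixed enumeration; coordinate z_p is z $ ix p.\<close>
definition ecoord :: "(nat \<Rightarrow> 'i) \<Rightarrow> nat \<Rightarrow> complex \<Rightarrow> complex^'i" where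
  "ecoord ix p c = axis (ix p) c"

text \<open>Wirtinger second derivative d^2 f / dz_l d(conj z_m) at z.\<close>
definition wirt2 :: "(nat \<Rightarrow> 'i::finite) \<Rightarrow> (complex^'i \<Rightarrow> real) \<Rightarrow> complex^'i \<Rightarrow> nat \<Rightarrow> nat \<Rightarrow> complex" where
  "wirt2 ix f z l m =
     (let xl = ecoord ix l 1; yl = ecoord ix l \<i>;
          xm = ecoord ix m 1; ym = ecoord ix m \<i>
      in (complex_of_real (dderivs [xl, xm] f z + dderivs [yl, ym] f z)
          + \<i> * complex_of_real (dderivs [xl, ym] f z - dderivs [yl, xm] f z)) / 4)"

text \<open>Kahler potential of g on the cone: a * ln(|z_0|^2+...+|z_m|^2);
  on the chart z_j = 1 it is a * ln(1 + sum of |w|^2).\<close>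
definition kpot :: "real \<Rightarrow> complex^'i::finite \<Rightarrow> real" where
  "kpot a z = a * ln (\<Sum>i\<in>UNIV. (cmod (z $ i))\<^sup>2)"

text \<open>g-admissibility of phi (lifted to Phi on C^N - {0}, homogeneous of
  degree 0): in every affine chart {z_j = 1}, with affine coordinates
  z_l, l \<noteq> j, the matrix g_{l mbar} + d^2 phi/dz_l dzbar_m is positive definite.\<close>
definition g_admissible :: "real \<Rightarrow> nat \<Rightarrow> (nat \<Rightarrow> 'i::finite) \<Rightarrow> (complex^'i \<Rightarrow> real) \<Rightarrow> bool" where
  "g_admissible a N ix Phi \<longleftrightarrow>
     (\<forall>j<N. \<forall>z. z $ ix j = 1 \<longrightarrow>
        (\<forall>\<xi>::nat \<Rightarrow> complex. (\<exists>l\<in>{..<N}-{j}. \<xi> l \<noteq> 0) \<longrightarrow>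
          (let q = (\<Sum>l\<in>{..<N}-{j}. \<Sum>m\<in>{..<N}-{j}.
                      (wirt2 ix (kpot a) z l m + wirt2 ix Phi z l m) * \<xi> l * cnj (\<xi> m))
           in q \<in> \<real> \<and> 0 < Re q)))"

definition perm_act :: "nat \<Rightarrow> (nat \<Rightarrow> 'i) \<Rightarrow> (nat \<Rightarrow> nat) \<Rightarrow> complex^'i \<Rightarrow> complex^'i" where
  "perm_act N ix s z = (\<chi> i. z $ ix (s (inv_into {..<N} ix i)))"

definition phase_act :: "(nat \<Rightarrow> 'i) \<Rightarrow> nat \<Rightarrow> real \<Rightarrow> complex^'i \<Rightarrow> complex^'i" where
  "phase_act ix p \<theta> z = (\<chi> i. if i = ix p then exp (\<i> * complex_of_real \<theta>) * z $ i else z $ i)"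

definition block_swap :: "nat \<Rightarrow> nat \<Rightarrow> nat \<Rightarrow> nat \<Rightarrow> nat" where
  "block_swap n i j p =
     (if p div n = i then j * n + p mod n
      else if p div n = j then i * n + p mod n else p)"

definition G_invariant :: "nat \<Rightarrow> nat \<Rightarrow> (nat \<Rightarrow> 'i) \<Rightarrow> (complex^'i \<Rightarrow> real) \<Rightarrow> bool" where
  "G_invariant n k ix Phi \<longleftrightarrow>
     (\<forall>i<k. \<forall>j<k. \<forall>z. Phi (perm_act (k*n) ix (block_swap n i j) z) = Phi z) \<and>
     (\<forall>p<k*n. \<forall>\<theta>. \<forall>z. Phi (phase_act ix p \<theta> z) = Phi z) \<and>
     (\<forall>p<k*n. \<forall>q<k*n. p div n = q div n \<longrightarrow>
        (\<forall>z. Phi (perm_act (k*n) ix (Transposition.transpose p q) z) = Phi z))"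

definition psi :: "real \<Rightarrow> nat \<Rightarrow> complex^'i::finite \<Rightarrow> real" where
  "psi a N z = ln ((\<Prod>i\<in>UNIV. cmod (z $ i)) powr (2 * a / real N)
                   / (\<Sum>i\<in>UNIV. (cmod (z $ i))\<^sup>2) powr a)"

end

theory Submission
  imports Defs
begin


lemma chain1:
  fixes F :: "'a::real_normed_vector \<Rightarrow> real" and c :: "real \<Rightarrow> 'a"
  assumes "finite I" "F differentiable (at (c \<tau>))"
    "(c has_vector_derivative (\<Sum>k\<in>I. p1 k *\<^sub>R e k)) (at \<tau>)"
  shows "((\<lambda>\<tau>. F (c \<tau>)) has_real_derivative (\<Sum>k\<in>I. p1 k * dderivs [e k] F (c \<tau>))) (at \<tau>)"
proof -
  let ?D = "frechet_derivative F (at (c \<tau>))"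
  let ?v = "\<Sum>k\<in>I. p1 k *\<^sub>R e k"
  have dF: "(F has_derivative ?D) (at (c \<tau>))" using assms(2) frechet_derivative_works by blast
  have lin: "linear ?D" using dF has_derivative_linear by blast
  have dc: "(c has_derivative (\<lambda>h. h *\<^sub>R ?v)) (at \<tau>)" using assms(3) has_vector_derivative_def by blast
  have comp: "((\<lambda>x. F (c x)) has_derivative (\<lambda>h. ?D (h *\<^sub>R ?v))) (at \<tau>)"
    by (rule has_derivative_compose[OF dc dF])
  have eq: "(\<lambda>h. ?D (h *\<^sub>R ?v)) = (*) (\<Sum>k\<in>I. p1 k * dderivs [e k] F (c \<tau>))"
  proof
    fix h
    have "?D (h *\<^sub>R ?v) = h * ?D ?v" using linear_scale[OF lin] by simp
    also have "?D ?v = (\<Sum>k\<in>I. ?D (p1 k *\<^sub>R e k))" by (rule linear_sum[OF lin])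
    also have "\<dots> = (\<Sum>k\<in>I. p1 k * ?D (e k))" using linear_scale[OF lin] by simp
    finally show "?D (h *\<^sub>R ?v) = (\<Sum>k\<in>I. p1 k * dderivs [e k] F (c \<tau>)) * h" by simp
  qed
  show ?thesis unfolding has_field_derivative_def using comp[unfolded eq] .
qed



lemma chain2:
  fixes F :: "'a::real_normed_vector \<Rightarrow> real" and c :: "real \<Rightarrow> 'a"
  assumes "finite I" "F differentiable (at (c \<tau>))"
    "\<And>k. k\<in>I \<Longrightarrow> dderivs [e k] F differentiable (at (c \<tau>))"
    "(c has_vector_derivative (\<Sum>k\<in>I. pa k \<tau> *\<^sub>R e k)) (at \<tau>)"
    "\<And>k. k\<in>I \<Longrightarrow> (pa k has_real_derivative pb k \<tau>) (at \<tau>)"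
  shows "((\<lambda>\<tau>. \<Sum>k\<in>I. pa k \<tau> * dderivs [e k] F (c \<tau>)) has_real_derivative
     (\<Sum>k\<in>I. pb k \<tau> * dderivs [e k] F (c \<tau>) + (\<Sum>j\<in>I. pa j \<tau> * dderivs [e j, e k] F (c \<tau>)) * pa k \<tau>)) (at \<tau>)"
proof (rule DERIV_sum)
  fix k assume k: "k \<in> I"
  have "((\<lambda>\<tau>. dderivs [e k] F (c \<tau>)) has_real_derivative (\<Sum>j\<in>I. pa j \<tau> * dderivs [e j] (dderivs [e k] F) (c \<tau>))) (at \<tau>)"
    by (rule chain1[OF assms(1) assms(3)[OF k] assms(4)])
  moreover have "\<And>j. dderivs [e j] (dderivs [e k] F) = dderivs [e j, e k] F" by simp
  ultimately have "((\<lambda>\<tau>. dderivs [e k] F (c \<tau>)) has_real_derivative (\<Sum>j\<in>I. pa j \<tau> * dderivs [e j, e k] F (c \<tau>))) (at \<tau>)"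
    by simp
  from DERIV_mult[OF assms(5)[OF k] this]
  show "((\<lambda>\<tau>. pa k \<tau> * dderivs [e k] F (c \<tau>)) has_real_derivative
     pb k \<tau> * dderivs [e k] F (c \<tau>) + (\<Sum>j\<in>I. pa j \<tau> * dderivs [e j, e k] F (c \<tau>)) * pa k \<tau>) (at \<tau>)" .
qed

lemma curve_deriv:
  fixes e :: "'k \<Rightarrow> 'a::real_normed_vector"
  assumes "\<And>k. k\<in>I \<Longrightarrow> (p k has_real_derivative p1 k) (at \<tau>)"
  shows "((\<lambda>\<tau>. \<Sum>k\<in>I. p k \<tau> *\<^sub>R e k) has_vector_derivative (\<Sum>k\<in>I. p1 k *\<^sub>R e k)) (at \<tau>)"
  by (rule has_vector_derivative_sum) (use assms in \<open>auto intro!: derivative_eq_intros\<close>)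

lemma rot_inv:
  fixes ix :: "nat \<Rightarrow> 'i::finite" and Phi :: "complex^'i \<Rightarrow> real"
  assumes bij: "bij_betw ix {..<N} (UNIV::'i set)"
   and ph: "\<forall>p<N. \<forall>\<theta> z. Phi (phase_act ix p \<theta> z) = Phi z"
  shows "Phi (\<chi> i. exp (\<i> * of_real (\<omega> i)) * z$i) = Phi z"
proof -
  have "Phi (\<chi> i. if i \<in> S then exp (\<i> * of_real (\<omega> i)) * z$i else z$i) = Phi z" for S
  proof -
    have "finite S" by simp
    then show ?thesis
    proof (induction S rule: finite_induct)
      case empty
      then show ?case by simp
    next
      case (insert i S)
      obtain p where p: "p < N" "ix p = i" proof -
        have "i \<in> ix ` {..<N}" using bij unfolding bij_betw_def by auto
        then show ?thesis using that by auto
      qed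
      have "(\<chi> j. if j \<in> insert i S then exp (\<i> * of_real (\<omega> j)) * z$j else z$j)
          = phase_act ix p (\<omega> i) (\<chi> j. if j \<in> S then exp (\<i> * of_real (\<omega> j)) * z$j else z$j)"
        using insert(2) p by (auto simp: vec_eq_iff phase_act_def)
      then show ?case using ph p insert(3) by simp
    qed
  qed
  from this[of UNIV] show ?thesis by simp
qed

lemma kpot_eq: "kpot a = (\<lambda>z::complex^'i::finite. a * ln (z \<bullet> z))"
  by (auto simp: fun_eq_iff kpot_def inner_vec_def power2_norm_eq_inner)

lemma kpot_deriv:
  fixes z :: "complex^'i::finite"
  assumes "z \<noteq> 0"
  shows "(kpot a has_derivative (\<lambda>h. a * ((h \<bullet> z + z \<bullet> h) / (z \<bullet> z)))) (at z)"
  unfolding kpot_eq using assms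
  by (auto intro!: derivative_eq_intros simp: fun_eq_iff divide_inverse inner_commute)

lemma kpot_diff: "(z::complex^'i::finite) \<noteq> 0 \<Longrightarrow> kpot a differentiable (at z)"
  using kpot_deriv differentiable_def by blast

lemma kpot_d1_diff:
  fixes z :: "complex^'i::finite"
  assumes "z \<noteq> 0"
  shows "dderivs [e] (kpot a) differentiable (at z)"
proof -
  let ?g = "\<lambda>y::complex^'i. a * ((e \<bullet> y + y \<bullet> e) / (y \<bullet> y))"
  have "?g differentiable (at z)"
    unfolding differentiable_def using assms by (auto intro!: exI derivative_eq_intros)
  then obtain g' where g': "(?g has_derivative g') (at z)" unfolding differentiable_def by blast
  have eqs: "\<And>y. y \<in> UNIV - {0} \<Longrightarrow> ?g y = dderivs [e] (kpot a) y"
  proof -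
    fix y :: "complex^'i" assume "y \<in> UNIV - {0}"
    then have "(\<lambda>h. a * ((h \<bullet> y + y \<bullet> h) / (y \<bullet> y))) = frechet_derivative (kpot a) (at y)"
      using kpot_deriv frechet_derivative_at by blast
    then show "?g y = dderivs [e] (kpot a) y" by (simp add: fun_eq_iff)
  qed
  have "(dderivs [e] (kpot a) has_derivative g') (at z)"
    by (rule has_derivative_transform_within_open[OF g', where s="UNIV - {0}"])
       (use assms eqs in auto)
  then show ?thesis unfolding differentiable_def by blast
qed



lemma sum_pair_bool:
  fixes f :: "'i::finite \<times> bool \<Rightarrow> 'b::comm_monoid_add"
  shows "(\<Sum>k\<in>UNIV. f k) = (\<Sum>i\<in>UNIV. f (i, False) + f (i, True))"
proof -
  have "(\<Sum>k\<in>UNIV. f k) = (\<Sum>k\<in>UNIV \<times> UNIV. f k)" by (metis UNIV_Times_UNIV)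
  also have "\<dots> = (\<Sum>i\<in>UNIV. \<Sum>b\<in>UNIV. f (i, b))" by (simp add: sum.cartesian_product case_prod_unfold)
  also have "\<dots> = (\<Sum>i\<in>UNIV. f (i, False) + f (i, True))" by (simp add: UNIV_bool add.commute)
  finally show ?thesis .
qed

lemma gamma_sum:
  "(\<Sum>i\<in>UNIV. f i *\<^sub>R axis i (1::complex)) = (\<chi> i. complex_of_real (f i) :: complex^'i::finite)"
  by (simp add: vec_eq_iff axis_def if_distrib cong: if_cong) (simp add: scaleR_conv_of_real)

lemma theta_sum:
  "(\<Sum>k\<in>UNIV. q k *\<^sub>R axis (fst k) (if snd k then \<i> else 1)) =
   (\<chi> i. complex_of_real (q (i,False)) + \<i> * complex_of_real (q (i, True)) :: complex^'i::finite)"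
  apply (subst sum_pair_bool)
  apply (simp add: vec_eq_iff axis_def if_distrib sum.distrib cong: if_cong)
  apply (simp add: scaleR_conv_of_real)
  done



lemma curve_lemma:
  fixes F :: "complex^'i::finite \<Rightarrow> real" and t :: "'i \<Rightarrow> real"
  assumes diff: "\<And>z. z \<noteq> 0 \<Longrightarrow> F differentiable (at z)"
    and diff1: "\<And>z e. z \<noteq> 0 \<Longrightarrow> dderivs [e] F differentiable (at z)"
    and rot: "\<And>\<omega> z. F (\<chi> i. exp (\<i> * of_real (\<omega> i)) * z$i) = F z"
  defines "\<gamma> \<equiv> \<lambda>s. (\<chi> i. complex_of_real (exp (s * t i)) :: complex^'i)"
  shows "((\<lambda>s. F (\<gamma> s)) has_real_derivative
            (\<Sum>i\<in>UNIV. (t i * exp (s * t i)) * dderivs [axis i 1] F (\<gamma> s))) (at s)"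
    and "((\<lambda>s. \<Sum>i\<in>UNIV. (t i * exp (s * t i)) * dderivs [axis i 1] F (\<gamma> s)) has_real_derivative
          (\<Sum>i\<in>UNIV. \<Sum>j\<in>UNIV. (t i * exp (s * t i)) * (t j * exp (s * t j)) *
             (dderivs [axis j 1, axis i 1] F (\<gamma> s) + dderivs [axis j \<i>, axis i \<i>] F (\<gamma> s)))) (at s)"
proof -
  have gnz: "\<gamma> s \<noteq> 0" for s
  proof
    assume "\<gamma> s = 0"
    then have "\<gamma> s $ undefined = 0" by simp
    then show False unfolding \<gamma>_def by simp
  qed
  have gsum: "\<gamma> = (\<lambda>s. \<Sum>i\<in>UNIV. exp (s * t i) *\<^sub>R axis i (1::complex))"
    unfolding \<gamma>_def by (simp add: gamma_sum)
  have gder: "(\<gamma> has_vector_derivative (\<Sum>i\<in>UNIV. (t i * exp (s * t i)) *\<^sub>R axis i (1::complex))) (at s)" for s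
    unfolding gsum by (rule curve_deriv) (auto intro!: derivative_eq_intros)
  show d1: "((\<lambda>s. F (\<gamma> s)) has_real_derivative
            (\<Sum>i\<in>UNIV. (t i * exp (s * t i)) * dderivs [axis i 1] F (\<gamma> s))) (at s)" for s
    by (rule chain1[OF _ diff[OF gnz] gder]) simp
  have d2: "((\<lambda>s. \<Sum>i\<in>UNIV. (t i * exp (s * t i)) * dderivs [axis i 1] F (\<gamma> s)) has_real_derivative
     (\<Sum>i\<in>UNIV. (t i * (t i * exp (s * t i))) * dderivs [axis i 1] F (\<gamma> s)
        + (\<Sum>j\<in>UNIV. (t j * exp (s * t j)) * dderivs [axis j 1, axis i 1] F (\<gamma> s)) * (t i * exp (s * t i)))) (at s)"
    by (rule chain2[where pa="\<lambda>i s. t i * exp (s * t i)" and pb = "\<lambda>i s. t i * (t i * exp (s * t i))",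
          OF _ diff[OF gnz] diff1[OF gnz] gder]) (auto intro!: derivative_eq_intros)
  define E where "E i = exp (s * t i)" for i
  define q where "q k \<theta> = (if snd k then E (fst k) * sin (\<theta> * t (fst k)) else E (fst k) * cos (\<theta> * t (fst k)))" for k \<theta>
  define q1 where "q1 k \<theta> = (if snd k then E (fst k) * (t (fst k) * cos (\<theta> * t (fst k)))
                              else - (E (fst k) * (t (fst k) * sin (\<theta> * t (fst k)))))" for k \<theta>
  define q2 where "q2 k \<theta> = (if snd k then - (E (fst k) * (t (fst k) * (t (fst k) * sin (\<theta> * t (fst k)))))
                              else - (E (fst k) * (t (fst k) * (t (fst k) * cos (\<theta> * t (fst k))))))" for k \<theta>
  define e2 :: "'i \<times> bool \<Rightarrow> complex^'i" where "e2 k = axis (fst k) (if snd k then \<i> else 1)" for k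
  define c where "c \<theta> = (\<Sum>k\<in>UNIV. q k \<theta> *\<^sub>R e2 k)" for \<theta>
  have qd: "(q k has_real_derivative q1 k \<theta>) (at \<theta>)" for k \<theta>
    unfolding q_def q1_def by (cases "snd k") (auto intro!: derivative_eq_intros)
  have q1d: "(q1 k has_real_derivative q2 k \<theta>) (at \<theta>)" for k \<theta>
    unfolding q2_def q1_def by (cases "snd k") (auto intro!: derivative_eq_intros)
  have cder: "(c has_vector_derivative (\<Sum>k\<in>UNIV. q1 k \<theta> *\<^sub>R e2 k)) (at \<theta>)" for \<theta>
    unfolding c_def[abs_def] by (rule curve_deriv) (rule qd)
  have ceq: "c \<theta> = (\<chi> i. exp (\<i> * of_real (\<theta> * t i)) * \<gamma> s $ i)" for \<theta>
    unfolding c_def e2_def theta_sum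
    by (simp add: vec_eq_iff q_def \<gamma>_def E_def complex_eq_iff Re_exp Im_exp)
  have c0: "c 0 = \<gamma> s" using ceq[of 0] by (simp add: vec_eq_iff)
  have cnz: "c \<theta> \<noteq> 0" for \<theta>
  proof
    assume "c \<theta> = 0"
    then have "c \<theta> $ undefined = 0" by simp
    then show False unfolding ceq \<gamma>_def by simp
  qed
  have Fc: "(\<lambda>\<theta>. F (c \<theta>)) = (\<lambda>\<theta>. F (\<gamma> s))"
  proof
    fix \<theta> show "F (c \<theta>) = F (\<gamma> s)" unfolding ceq by (rule rot)
  qed
  define g1 where "g1 \<theta> = (\<Sum>k\<in>UNIV. q1 k \<theta> * dderivs [e2 k] F (c \<theta>))" for \<theta>
  have "((\<lambda>\<theta>. F (c \<theta>)) has_real_derivative g1 \<theta>) (at \<theta>)" for \<theta>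
    unfolding g1_def by (rule chain1[OF _ diff[OF cnz] cder]) simp
  then have "g1 \<theta> = 0" for \<theta>
    unfolding Fc using DERIV_const DERIV_unique by blast
  then have g1z: "g1 = (\<lambda>_. 0)" by auto
  have "(g1 has_real_derivative
     (\<Sum>k\<in>UNIV. q2 k 0 * dderivs [e2 k] F (c 0)
        + (\<Sum>j\<in>UNIV. q1 j 0 * dderivs [e2 j, e2 k] F (c 0)) * q1 k 0)) (at 0)"
    unfolding g1_def[abs_def]
    by (rule chain2[OF _ diff[OF cnz] diff1[OF cnz] cder q1d]) simp
  then have G2: "(\<Sum>k\<in>UNIV. q2 k 0 * dderivs [e2 k] F (c 0)
        + (\<Sum>j\<in>UNIV. q1 j 0 * dderivs [e2 j, e2 k] F (c 0)) * q1 k 0) = 0"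
    unfolding g1z using DERIV_const DERIV_unique by blast
  have G2': "(\<Sum>i\<in>UNIV. - (t i * (t i * E i)) * dderivs [axis i 1] F (\<gamma> s)
        + (\<Sum>j\<in>UNIV. (t j * E j) * dderivs [axis j \<i>, axis i \<i>] F (\<gamma> s)) * (t i * E i)) = 0"
    using G2 unfolding c0 by (simp add: sum_pair_bool q1_def q2_def e2_def mult_ac)
  show "((\<lambda>s. \<Sum>i\<in>UNIV. (t i * exp (s * t i)) * dderivs [axis i 1] F (\<gamma> s)) has_real_derivative
          (\<Sum>i\<in>UNIV. \<Sum>j\<in>UNIV. (t i * exp (s * t i)) * (t j * exp (s * t j)) *
             (dderivs [axis j 1, axis i 1] F (\<gamma> s) + dderivs [axis j \<i>, axis i \<i>] F (\<gamma> s)))) (at s)"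
  proof -
    have "(\<Sum>i\<in>UNIV. (t i * (t i * exp (s * t i))) * dderivs [axis i 1] F (\<gamma> s)
        + (\<Sum>j\<in>UNIV. (t j * exp (s * t j)) * dderivs [axis j 1, axis i 1] F (\<gamma> s)) * (t i * exp (s * t i)))
      = (\<Sum>i\<in>UNIV. (t i * (t i * exp (s * t i))) * dderivs [axis i 1] F (\<gamma> s)
        + (\<Sum>j\<in>UNIV. (t j * exp (s * t j)) * dderivs [axis j 1, axis i 1] F (\<gamma> s)) * (t i * exp (s * t i)))
        + (\<Sum>i\<in>UNIV. - (t i * (t i * E i)) * dderivs [axis i 1] F (\<gamma> s)
        + (\<Sum>j\<in>UNIV. (t j * E j) * dderivs [axis j \<i>, axis i \<i>] F (\<gamma> s)) * (t i * E i))"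
      using G2' by simp
    also have "\<dots> = (\<Sum>i\<in>UNIV. \<Sum>j\<in>UNIV. (t i * exp (s * t i)) * (t j * exp (s * t j)) *
             (dderivs [axis j 1, axis i 1] F (\<gamma> s) + dderivs [axis j \<i>, axis i \<i>] F (\<gamma> s)))"
      unfolding E_def sum.distrib[symmetric] sum_distrib_right
      by (intro sum.cong refl) (simp add: algebra_simps sum.distrib)
    finally show ?thesis using d2 by simp
  qed
qed



lemma reidx1:
  fixes ix :: "nat \<Rightarrow> 'i::finite" and h :: "'i \<Rightarrow> real"
  assumes bij: "bij_betw ix {..<N} (UNIV :: 'i set)" and N: "0 < N" and h0: "h (ix 0) = 0"
  shows "(\<Sum>i\<in>UNIV. h i) = (\<Sum>l\<in>{..<N}-{0}. h (ix l))"
proof -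
  have "(\<Sum>i\<in>UNIV. h i) = (\<Sum>l\<in>{..<N}. h (ix l))" using sum.reindex_bij_betw[OF bij, of h] by simp
  also have "\<dots> = h (ix 0) + (\<Sum>l\<in>{..<N}-{0}. h (ix l))" using N by (simp add: sum.remove)
  finally show ?thesis using h0 by simp
qed

lemma reidx2:
  fixes ix :: "nat \<Rightarrow> 'i::finite" and G :: "'i \<Rightarrow> 'i \<Rightarrow> real"
  assumes bij: "bij_betw ix {..<N} (UNIV :: 'i set)" and N: "0 < N"
    and G1: "\<And>j. G (ix 0) j = 0" and G2: "\<And>i. G i (ix 0) = 0"
  shows "(\<Sum>i\<in>UNIV. \<Sum>j\<in>UNIV. G i j) = (\<Sum>l\<in>{..<N}-{0}. \<Sum>m\<in>{..<N}-{0}. G (ix l) (ix m))"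
proof -
  have "(\<Sum>i\<in>UNIV. \<Sum>j\<in>UNIV. G i j) = (\<Sum>l\<in>{..<N}-{0}. \<Sum>j\<in>UNIV. G (ix l) j)"
    by (rule reidx1[OF bij N]) (simp add: G1)
  also have "\<dots> = (\<Sum>l\<in>{..<N}-{0}. \<Sum>m\<in>{..<N}-{0}. G (ix l) (ix m))"
    by (intro sum.cong refl reidx1[OF bij N]) (simp add: G2)
  finally show ?thesis .
qed

lemma Re_wirt2:
  "Re (wirt2 ix F z l m) = (dderivs [axis (ix l) 1, axis (ix m) 1] F z + dderivs [axis (ix l) \<i>, axis (ix m) \<i>] F z) / 4"
  by (simp add: wirt2_def Let_def ecoord_def)



lemma kpot_rot: "kpot a (\<chi> i. exp (\<i> * of_real (\<omega> i)) * z$i) = kpot a (z::complex^'i::finite)"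
  by (simp add: kpot_def norm_mult)

lemma main_pos:
  fixes ix :: "nat \<Rightarrow> 'i::finite" and Phi :: "complex^'i \<Rightarrow> real" and r :: "'i \<Rightarrow> real"
  assumes bij: "bij_betw ix {..<N} (UNIV :: 'i set)" and N: "0 < N" and a: "a > 0"
   and diffP: "\<And>z. z\<noteq>0 \<Longrightarrow> Phi differentiable (at z)"
   and diffP1: "\<And>z e. z\<noteq>0 \<Longrightarrow> dderivs [e] Phi differentiable (at z)"
   and rotP: "\<And>\<omega> z. Phi (\<chi> i. exp (\<i> * of_real (\<omega> i)) * z$i) = Phi z"
   and le0: "\<And>z. z\<noteq>0 \<Longrightarrow> Phi z \<le> 0"
   and adm: "g_admissible a N ix Phi"
   and rpos: "\<And>i. r i > 0" and r0: "r (ix 0) = 1"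
  shows "Phi (\<chi> i. of_real (r i)) \<le> Phi (\<chi> i. 1) + a * ln N"
proof -
  define t where "t i = ln (r i)" for i
  have t0: "t (ix 0) = 0" using r0 by (simp add: t_def)
  define \<gamma> where "\<gamma> s = (\<chi> i. complex_of_real (exp (s * t i)) :: complex^'i)" for s
  have gnz: "\<gamma> s \<noteq> 0" for s
  proof
    assume "\<gamma> s = 0"
    then have "\<gamma> s $ undefined = 0" by simp
    then show False unfolding \<gamma>_def by simp
  qed
  have cardN: "card (UNIV :: 'i set) = N" using bij_betw_same_card[OF bij] by simp
  define v where "v s i = t i * exp (s * t i)" for s i
  define DK where "DK s = (\<Sum>i\<in>UNIV. (t i * exp (s * t i)) * dderivs [axis i 1] (kpot a) (\<gamma> s))" for s
  define DP where "DP s = (\<Sum>i\<in>UNIV. (t i * exp (s * t i)) * dderivs [axis i 1] Phi (\<gamma> s))" for s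
  define QK where "QK s = (\<Sum>i\<in>UNIV. \<Sum>j\<in>UNIV. (t i * exp (s * t i)) * (t j * exp (s * t j)) *
             (dderivs [axis j 1, axis i 1] (kpot a) (\<gamma> s) + dderivs [axis j \<i>, axis i \<i>] (kpot a) (\<gamma> s)))" for s
  define QP where "QP s = (\<Sum>i\<in>UNIV. \<Sum>j\<in>UNIV. (t i * exp (s * t i)) * (t j * exp (s * t j)) *
             (dderivs [axis j 1, axis i 1] Phi (\<gamma> s) + dderivs [axis j \<i>, axis i \<i>] Phi (\<gamma> s)))" for s
  have K1: "((\<lambda>s. kpot a (\<gamma> s)) has_real_derivative DK s) (at s)" for s
    unfolding \<gamma>_def DK_def by (rule curve_lemma(1)[OF kpot_diff kpot_d1_diff kpot_rot])
  have K2: "(DK has_real_derivative QK s) (at s)" for s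
    unfolding \<gamma>_def DK_def[abs_def] QK_def by (rule curve_lemma(2)[OF kpot_diff kpot_d1_diff kpot_rot])
  have P1: "((\<lambda>s. Phi (\<gamma> s)) has_real_derivative DP s) (at s)" for s
    unfolding \<gamma>_def DP_def by (rule curve_lemma(1)[OF diffP diffP1 rotP])
  have P2: "(DP has_real_derivative QP s) (at s)" for s
    unfolding \<gamma>_def DP_def[abs_def] QP_def by (rule curve_lemma(2)[OF diffP diffP1 rotP])
  define f where "f s = kpot a (\<gamma> s) + Phi (\<gamma> s)" for s
  have f1: "(f has_real_derivative (DK s + DP s)) (at s)" for s
    unfolding f_def[abs_def] by (rule DERIV_add[OF K1 P1])
  have f2: "((\<lambda>s. DK s + DP s) has_real_derivative (QK s + QP s)) (at s)" for s
    by (rule DERIV_add[OF K2 P2])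
  have Qnn: "QK s + QP s \<ge> 0" for s
  proof -
    let ?L = "{..<N} - {0}"
    define \<xi> where "\<xi> l = complex_of_real (v s (ix l))" for l
    define q where "q = (\<Sum>l\<in>?L. \<Sum>m\<in>?L.
                      (wirt2 ix (kpot a) (\<gamma> s) l m + wirt2 ix Phi (\<gamma> s) l m) * \<xi> l * cnj (\<xi> m))"
    have z1: "\<gamma> s $ ix 0 = 1" unfolding \<gamma>_def by (simp add: t0)
    have "0 \<le> Re q"
    proof (cases "\<exists>l\<in>?L. \<xi> l \<noteq> 0")
      case True
      have "\<forall>\<xi>::nat \<Rightarrow> complex. (\<exists>l\<in>?L. \<xi> l \<noteq> 0) \<longrightarrow>
          (let q = (\<Sum>l\<in>?L. \<Sum>m\<in>?L.
                      (wirt2 ix (kpot a) (\<gamma> s) l m + wirt2 ix Phi (\<gamma> s) l m) * \<xi> l * cnj (\<xi> m))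
           in q \<in> \<real> \<and> 0 < Re q)"
        using adm z1 N unfolding g_admissible_def by blast
      then have "0 < Re q" using True unfolding q_def Let_def by blast
      then show ?thesis by simp
    next
      case False
      then have "q = 0" unfolding q_def by simp
      then show ?thesis by simp
    qed
    also have "Re q = (\<Sum>l\<in>?L. \<Sum>m\<in>?L. v s (ix l) * v s (ix m) *
        (dderivs [axis (ix l) 1, axis (ix m) 1] (kpot a) (\<gamma> s) + dderivs [axis (ix l) \<i>, axis (ix m) \<i>] (kpot a) (\<gamma> s)
        + dderivs [axis (ix l) 1, axis (ix m) 1] Phi (\<gamma> s) + dderivs [axis (ix l) \<i>, axis (ix m) \<i>] Phi (\<gamma> s)) / 4)"
      unfolding q_def Re_sum \<xi>_def by (intro sum.cong refl) (simp add: Re_wirt2 field_simps)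
    also have "\<dots> = (\<Sum>m\<in>?L. \<Sum>l\<in>?L. v s (ix l) * v s (ix m) *
        (dderivs [axis (ix l) 1, axis (ix m) 1] (kpot a) (\<gamma> s) + dderivs [axis (ix l) \<i>, axis (ix m) \<i>] (kpot a) (\<gamma> s)
        + dderivs [axis (ix l) 1, axis (ix m) 1] Phi (\<gamma> s) + dderivs [axis (ix l) \<i>, axis (ix m) \<i>] Phi (\<gamma> s)) / 4)"
      by (rule sum.swap)
    also have "\<dots> = (\<Sum>i\<in>UNIV. \<Sum>j\<in>UNIV. v s j * v s i *
        (dderivs [axis j 1, axis i 1] (kpot a) (\<gamma> s) + dderivs [axis j \<i>, axis i \<i>] (kpot a) (\<gamma> s)
        + dderivs [axis j 1, axis i 1] Phi (\<gamma> s) + dderivs [axis j \<i>, axis i \<i>] Phi (\<gamma> s)) / 4)"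
      by (rule reidx2[OF bij N, symmetric]) (simp_all add: v_def t0)
    also have "\<dots> = (QK s + QP s) / 4"
      unfolding QK_def QP_def v_def sum_divide_distrib sum.distrib[symmetric]
      by (intro sum.cong refl) (simp add: field_simps)
    finally show ?thesis by simp
  qed
  have convf: "convex_on UNIV f"
  proof (rule convex_on_realI[where f'="\<lambda>s. DK s + DP s"])
    show "connected (UNIV :: real set)" by simp
    show "(f has_real_derivative DK x + DP x) (at x)" for x by (rule f1)
    show "DK x + DP x \<le> DK y + DP y" if "x \<le> y" for x y
      by (rule DERIV_nonneg_imp_nondecreasing[OF that]) (use f2 Qnn in blast)
  qed
  define T where "T = Max (range t)"
  have tT: "t i \<le> T" for i unfolding T_def by simp
  have "T \<in> range t" unfolding T_def by (rule Max_in) auto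
  then obtain i0 where i0: "t i0 = T" by auto
  have T0: "0 \<le> T" using tT[of "ix 0"] t0 by simp
  have kg: "kpot a (\<gamma> s) = a * ln (\<Sum>i\<in>UNIV. exp (s * t i) ^ 2)" for s
    by (simp add: kpot_def \<gamma>_def)
  define P1 where "P1 = Phi (\<chi> i. 1)"
  define PR where "PR = Phi (\<chi> i. of_real (r i))"
  define L where "L = a * ln N"
  have P1le: "P1 \<le> 0" unfolding P1_def
  proof (rule le0)
    show "(\<chi> i. (1::complex)) \<noteq> (0 :: complex^'i)"
    proof
      assume "(\<chi> i. (1::complex)) = (0 :: complex^'i)"
      then have "((\<chi> i. (1::complex)) :: complex^'i) $ undefined = (0 :: complex^'i) $ undefined" by simp
      then show False by simp
    qed
  qed
  have g0: "\<gamma> 0 = (\<chi> i. 1)" by (simp add: \<gamma>_def vec_eq_iff)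
  have g1: "\<gamma> 1 = (\<chi> i. of_real (r i))" by (simp add: \<gamma>_def vec_eq_iff t_def rpos)
  have f0: "f 0 = L + P1"
    unfolding f_def kg g0[symmetric] P1_def L_def by (simp add: cardN)
  have fS: "f S \<le> L + 2 * a * S * T" if S: "0 \<le> S" for S
  proof -
    have "(\<Sum>i\<in>UNIV. exp (S * t i) ^ 2) \<le> (\<Sum>i\<in>(UNIV::'i set). exp (S * T) ^ 2)"
      by (intro sum_mono power_mono) (use S tT in \<open>auto intro: mult_left_mono\<close>)
    also have "\<dots> = real N * exp (2 * S * T)"
      by (simp add: cardN power2_eq_square exp_add[symmetric])
    finally have le: "(\<Sum>i\<in>UNIV. exp (S * t i) ^ 2) \<le> real N * exp (2 * S * T)" .
    have pos: "0 < (\<Sum>i\<in>(UNIV::'i set). exp (S * t i) ^ 2)"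
      by (rule sum_pos) auto
    have "ln (\<Sum>i\<in>UNIV. exp (S * t i) ^ 2) \<le> ln (real N * exp (2 * S * T))"
      using le pos by simp
    also have "\<dots> = ln N + 2 * S * T" using N by (simp add: ln_mult)
    finally have "kpot a (\<gamma> S) \<le> a * (ln N + 2 * S * T)"
      unfolding kg using a by (simp add: mult_left_mono)
    moreover have "Phi (\<gamma> S) \<le> 0" using le0 gnz by blast
    ultimately show ?thesis unfolding f_def L_def by (simp add: algebra_simps)
  qed
  have f1v: "PR + 2 * a * T \<le> f 1"
  proof -
    have "exp (1 * t i0) ^ 2 \<le> (\<Sum>i\<in>UNIV. exp (1 * t i) ^ 2)"
      by (rule member_le_sum) auto
    moreover have "exp (1 * t i0) ^ 2 = exp (2 * T)"
      using i0 by (simp add: power2_eq_square exp_add[symmetric])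
    ultimately have "2 * T \<le> ln (\<Sum>i\<in>UNIV. exp (1 * t i) ^ 2)"
      by (metis exp_gt_zero ln_exp ln_le_cancel_iff order_less_le_trans)
    then have "2 * a * T \<le> kpot a (\<gamma> 1)"
      unfolding kg using a by (metis mult.assoc mult.commute mult_left_mono less_imp_le)
    then show ?thesis unfolding f_def PR_def g1 by simp
  qed
  have key: "PR \<le> L + P1 + (- P1) / S" if S: "S > 1" for S
  proof -
    have "f ((1 - 1/S) *\<^sub>R 0 + (1/S) *\<^sub>R S) \<le> (1 - 1/S) * f 0 + (1/S) * f S"
      by (rule convex_onD[OF convf]) (use S in auto)
    moreover have "(1 - 1/S) *\<^sub>R 0 + (1/S) *\<^sub>R S = 1" using S by simp
    ultimately have "f 1 \<le> (1 - 1/S) * f 0 + (1/S) * f S" by simp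
    also have "\<dots> \<le> (1 - 1/S) * (L + P1) + (1/S) * (L + 2 * a * S * T)"
      unfolding f0 using fS[of S] S by (intro add_left_mono mult_left_mono) auto
    also have "\<dots> = L + P1 + (- P1) / S + 2 * a * T"
      using S by (simp add: field_simps)
    finally show ?thesis using f1v by simp
  qed
  have "PR \<le> L + P1"
  proof (rule ccontr)
    assume "\<not> PR \<le> L + P1"
    then obtain d where d: "0 < d" "d = PR - (L + P1)" by simp
    define S where "S = 2 + (- P1) / d"
    have S1: "S > 1" unfolding S_def using d P1le by (simp add: add_pos_nonneg)
    have "d * S = 2 * d + (- P1)"
      unfolding S_def using d(1) by (simp add: right_diff_distrib)
    then have "- P1 < d * S" using d by linarith
    then have "(- P1) / S < d" using S1 by (subst pos_divide_less_eq) auto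
    then show False using key[OF S1] d by simp
  qed
  then show ?thesis unfolding PR_def P1_def L_def by simp
qed



lemma unrot: "exp (\<i> * of_real (- Arg w)) * w = complex_of_real (cmod w)"
proof -
  have eq: "w = of_real (cmod w) * exp (\<i> * of_real (Arg w))"
    using rcis_cmod_Arg[of w] by (simp add: rcis_def cis_conv_exp)
  have e: "exp (\<i> * of_real (- Arg w)) * exp (\<i> * of_real (Arg w)) = 1"
    by (simp add: exp_add[symmetric])
  have "exp (\<i> * of_real (- Arg w)) * w = exp (\<i> * of_real (- Arg w)) * (of_real (cmod w) * exp (\<i> * of_real (Arg w)))"
    using eq by (rule arg_cong)
  also have "\<dots> = of_real (cmod w) * (exp (\<i> * of_real (- Arg w)) * exp (\<i> * of_real (Arg w)))"
    by (simp only: mult.left_commute)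
  also have "\<dots> = of_real (cmod w)" using e by simp
  finally show ?thesis .
qed

theorem lemma4:
  fixes k n :: nat and a :: real
    and ix :: "nat \<Rightarrow> 'i::finite"
    and Phi :: "complex^'i \<Rightarrow> real"
  assumes "k \<ge> 1" and "n \<ge> 1"
    and "a > 0"
    and "bij_betw ix {..<k*n} (UNIV :: 'i set)"
    and "\<forall>z (c::complex). z \<noteq> 0 \<longrightarrow> c \<noteq> 0 \<longrightarrow> Phi (\<chi> i. c * z $ i) = Phi z"
    and "smooth_on (UNIV - {0}) Phi"
    and "g_admissible a (k*n) ix Phi"
    and "G_invariant n k ix Phi"
    and "(SUP z\<in>UNIV - {0}. Phi z) = 0"
  shows "Phi (\<chi> i. 1) - psi a (k*n) ((\<chi> i. 1) :: complex^'i) \<ge> 0"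
proof -
  define N where "N = k * n"
  have N: "0 < N" unfolding N_def using assms(1,2) by simp
  have bij: "bij_betw ix {..<N} (UNIV :: 'i set)" using assms(4) unfolding N_def .
  have a: "a > 0" by fact
  have hom: "\<And>z c. z \<noteq> 0 \<Longrightarrow> c \<noteq> 0 \<Longrightarrow> Phi (\<chi> i. c * z $ i) = Phi z" using assms(5) by blast
  have adm: "g_admissible a N ix Phi" using assms(7) unfolding N_def .
  have diffP: "Phi differentiable (at z)" if "z \<noteq> 0" for z
  proof -
    have "dderivs [] Phi differentiable (at z)" using assms(6) that unfolding smooth_on_def by blast
    then show ?thesis by simp
  qed
  have diffP1: "dderivs [e] Phi differentiable (at z)" if "z \<noteq> 0" for z e
    using assms(6) that unfolding smooth_on_def by blast
  have contP: "isCont Phi z" if "z \<noteq> 0" for z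
    using diffP[OF that] differentiable_imp_continuous_within by blast
  have rotP: "Phi (\<chi> i. exp (\<i> * of_real (\<omega> i)) * z$i) = Phi z" for \<omega> z
    by (rule rot_inv[OF bij]) (use assms(8) in \<open>simp add: G_invariant_def N_def\<close>)
  have bdd: "bdd_above (Phi ` (UNIV - {0}))"
  proof -
    have "continuous_on (sphere 0 1) Phi"
      by (rule continuous_at_imp_continuous_on) (auto intro: contP)
    then have "compact (Phi ` sphere 0 1)" by (rule compact_continuous_image[OF _ compact_sphere])
    then have "bdd_above (Phi ` sphere 0 1)" by (intro bounded_imp_bdd_above compact_imp_bounded)
    then obtain M where M0: "\<forall>y\<in>Phi ` sphere 0 1. y \<le> M" unfolding bdd_above_def by blast
    have M: "Phi x \<le> M" if "x \<in> sphere 0 1" for x using M0 that by blast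
    have "Phi z \<le> M" if z: "z \<noteq> 0" for z
    proof -
      have c: "complex_of_real (1 / norm z) \<noteq> 0" using z by simp
      have eqv: "(\<chi> i. complex_of_real (1 / norm z) * z $ i) = (1 / norm z) *\<^sub>R z"
        by (simp add: vec_eq_iff scaleR_conv_of_real[where 'a=complex])
      have "(1 / norm z) *\<^sub>R z \<in> sphere 0 1" using z by simp
      then have "Phi ((1 / norm z) *\<^sub>R z) \<le> M" by (rule M)
      then show ?thesis using hom[OF z c] eqv by simp
    qed
    then show ?thesis unfolding bdd_above_def by blast
  qed
  have le0: "Phi z \<le> 0" if "z \<noteq> 0" for z
    using cSUP_upper[of z "UNIV - {0}" Phi, OF _ bdd] that assms(9) by simp
  define C where "C = Phi (\<chi> i. 1) + a * ln N"
  have posr: "Phi (\<chi> i. of_real (r i)) \<le> C" if rpos: "\<And>i. r i > 0" for r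
  proof -
    define r' where "r' i = r i / r (ix 0)" for i
    have r0: "r (ix 0) > 0" by (rule rpos)
    have r'pos: "r' i > 0" for i unfolding r'_def using rpos[of i] r0 by simp
    have r'0: "r' (ix 0) = 1" unfolding r'_def using r0 by simp
    have nz: "(\<chi> i. complex_of_real (r i)) \<noteq> 0"
    proof
      assume "(\<chi> i. complex_of_real (r i)) = 0"
      then have "(\<chi> i. complex_of_real (r i)) $ ix 0 = 0" by simp
      then show False using rpos[of "ix 0"] by simp
    qed
    have c: "complex_of_real (1 / r (ix 0)) \<noteq> 0" using rpos[of "ix 0"] by simp
    have "Phi (\<chi> i. complex_of_real (r i)) = Phi (\<chi> i. complex_of_real (1 / r (ix 0)) * (\<chi> i. complex_of_real (r i)) $ i)"
      using hom[OF nz c] by simp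
    also have "\<dots> = Phi (\<chi> i. complex_of_real (r' i))" by (simp add: r'_def)
    also have "\<dots> \<le> C" unfolding C_def
      by (rule main_pos[where r=r', OF bij N a diffP diffP1 rotP le0 adm r'pos r'0])
    finally show ?thesis .
  qed
  have allz: "Phi z \<le> C" if z: "z \<noteq> 0" for z
  proof -
    define R0 where "R0 = (\<chi> i. complex_of_real (cmod (z $ i)))"
    have "Phi z = Phi R0"
      using rotP[of "\<lambda>i. - Arg (z $ i)" z] unfolding R0_def unrot by simp
    have R0nz: "R0 \<noteq> 0"
    proof
      assume "R0 = 0"
      then have "\<forall>i. z $ i = 0" unfolding R0_def by (simp add: vec_eq_iff)
      then show False using z by (simp add: vec_eq_iff)
    qed
    define one :: "complex^'i" where "one = (\<chi> i. 1)"
    define X where "X m = R0 + (1 / real m) *\<^sub>R one" for m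
    have "X \<longlonglongrightarrow> R0 + 0 *\<^sub>R one"
      unfolding X_def by (intro tendsto_intros)
    then have "X \<longlonglongrightarrow> R0" by simp
    then have lim: "(\<lambda>m. Phi (X m)) \<longlonglongrightarrow> Phi R0" by (rule isCont_tendsto_compose[OF contP[OF R0nz]])
    have "Phi (X m) \<le> C" if m: "m \<ge> 1" for m
    proof -
      have "X m = (\<chi> i. complex_of_real (cmod (z $ i) + 1 / real m))"
        unfolding X_def R0_def one_def by (simp add: vec_eq_iff scaleR_conv_of_real[where 'a=complex])
      moreover have "Phi (\<chi> i. complex_of_real (cmod (z $ i) + 1 / real m)) \<le> C"
        by (rule posr) (use m in \<open>auto intro: add_nonneg_pos\<close>)
      ultimately show ?thesis by simp
    qed
    then have "Phi R0 \<le> C" by (intro LIMSEQ_le_const2[OF lim]) auto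
    then show ?thesis using \<open>Phi z = Phi R0\<close> by simp
  qed
  have ne: "UNIV - {0} \<noteq> ({} :: (complex^'i) set)"
  proof -
    have "(\<chi> i. (1::complex)) \<noteq> (0 :: complex^'i)"
    proof
      assume "(\<chi> i. (1::complex)) = (0 :: complex^'i)"
      then have "((\<chi> i. (1::complex)) :: complex^'i) $ undefined = (0 :: complex^'i) $ undefined" by simp
      then show False by simp
    qed
    then show ?thesis by blast
  qed
  have "0 \<le> C" using cSUP_least[OF ne, of Phi C] allz assms(9) by simp
  have cardN: "card (UNIV :: 'i set) = N" using bij_betw_same_card[OF bij] by simp
  have "psi a (k*n) ((\<chi> i. 1) :: complex^'i) = - (a * ln N)"
    unfolding psi_def N_def[symmetric] using N by (simp add: cardN ln_div)
  then show ?thesis using \<open>0 \<le> C\<close> unfolding C_def by simp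
qed

end
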